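(* For every positive integer $n$, $$\sum_{j=1}^{n}\csc^6\left(\frac{(2j-1)\pi}{4n+2}\right) = \frac{8(n+1)n(8n^4+16n^3+19n^2+11n+6)}{15}.$$ *)

theory Defs
  imports Complex_Main
begin

definition csc :: "real \<Rightarrow> real" where
  "csc x = 1 / sin x"

end

theory Submission
  imports Defs "HOL-Computational_Algebra.Polynomial"
begin

fun Qp :: "nat \<Rightarrow> real poly" where
  "Qp 0 = 1"
| "Qp (Suc 0) = [:1, -4:]"
| "Qp (Suc (Suc n)) = [:2, -4:] * Qp (Suc n) - Qp n"

lemma mult_24: "[:2, -4:] * p = smult 2 p + pCons 0 (smult (-4) p)"
  by (simp add: mult_pCons_left)

lemma Qp_deg: "degree (Qp n) \<le> n"
proof (induction n rule: Qp.induct)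
  case (3 n)
  have "degree ([:2, -4:] * Qp (Suc n)) \<le> Suc (Suc n)"
    using degree_mult_le[of "[:2, -4:]" "Qp (Suc n)"] 3(1) by simp
  moreover have "degree (Qp n) \<le> Suc (Suc n)" using 3(2) by simp
  ultimately show ?case using degree_diff_le by (metis Qp.simps(3))
qed auto

lemma Qp_c0: "coeff (Qp n) 0 = 1"
  by (induction n rule: Qp.induct) (auto simp: mult_24)

lemma Qp_c1: "coeff (Qp n) 1 = -2 * real n - 2 * real n ^ 2"
  by (induction n rule: Qp.induct) (auto simp: mult_24 Qp_c0 algebra_simps power2_eq_square)

lemma Qp_c2: "coeff (Qp n) 2 = -4/3 * real n - 2/3 * real n ^ 2 + 4/3 * real n ^ 3 + 2/3 * real n ^ 4"
proof (induction n rule: Qp.induct)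
  case (3 n)
  have "coeff (Qp (Suc (Suc n))) 2 = 2 * coeff (Qp (Suc n)) 2 - 4 * coeff (Qp (Suc n)) 1 - coeff (Qp n) 2"
    by (simp add: mult_24 numeral_2_eq_2)
  also have "\<dots> = -4/3 * real (Suc (Suc n)) - 2/3 * real (Suc (Suc n)) ^ 2 + 4/3 * real (Suc (Suc n)) ^ 3 + 2/3 * real (Suc (Suc n)) ^ 4"
    unfolding 3 Qp_c1 by (simp add: field_simps power2_eq_square power3_eq_cube power4_eq_xxxx)
  finally show ?case .
qed (auto simp: numeral_2_eq_2)

lemma Qp_c3: "coeff (Qp n) 3 = -16/15 * real n - 16/45 * real n ^ 2 + 4/3 * real n ^ 3 + 4/9 * real n ^ 4 - 4/15 * real n ^ 5 - 4/45 * real n ^ 6"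
proof (induction n rule: Qp.induct)
  case (3 n)
  have "coeff (Qp (Suc (Suc n))) 3 = 2 * coeff (Qp (Suc n)) 3 - 4 * coeff (Qp (Suc n)) 2 - coeff (Qp n) 3"
    by (simp add: mult_24 numeral_3_eq_3 numeral_2_eq_2)
  also have "\<dots> = -16/15 * real (Suc (Suc n)) - 16/45 * real (Suc (Suc n)) ^ 2 + 4/3 * real (Suc (Suc n)) ^ 3 + 4/9 * real (Suc (Suc n)) ^ 4 - 4/15 * real (Suc (Suc n)) ^ 5 - 4/45 * real (Suc (Suc n)) ^ 6"
    unfolding 3 Qp_c2 of_nat_Suc by algebra
  finally show ?case .
qed (auto simp: numeral_3_eq_3)

lemma Qp_cos: "cos ((2 * real n + 1) * x) = cos x * poly (Qp n) (sin x ^ 2)"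
proof (induction n rule: Qp.induct)
  case 2
  have "cos (3 * x) = 4 * cos x ^ 3 - 3 * cos x" by (rule cos_treble_cos)
  moreover have "poly (Qp 1) (sin x ^ 2) = 4 * cos x ^ 2 - 3"
    using sin_squared_eq[of x] by simp
  ultimately show ?case
    by (simp add: algebra_simps power3_eq_cube power2_eq_square) algebra
next
  case (3 n)
  let ?a = "(2 * real (Suc n) + 1) * x"
  have e1: "(2 * real (Suc (Suc n)) + 1) * x = ?a + 2 * x" by (simp add: algebra_simps)
  have e2: "(2 * real n + 1) * x = ?a - 2 * x" by (simp add: algebra_simps)
  have "cos (?a + 2 * x) = 2 * cos (2 * x) * cos ?a - cos (?a - 2 * x)"
    by (simp add: cos_add cos_diff)
  then have "cos ((2 * real (Suc (Suc n)) + 1) * x) = 2 * (1 - 2 * sin x ^ 2) * cos ?a - cos ((2 * real n + 1) * x)"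
    unfolding e1 e2 by (simp add: cos_double_sin)
  then show ?case using 3 by (simp add: algebra_simps mult_24)
qed auto


lemma coeff_lin_mult:
  fixes p :: "real poly"
  shows "coeff ([:1, -a:] * p) 0 = coeff p 0"
  "coeff ([:1, -a:] * p) (Suc m) = coeff p (Suc m) - a * coeff p m"
  by (simp_all add: mult_pCons_left)

lemma vieta3:
  fixes y :: "'a \<Rightarrow> real"
  assumes "finite K"
  shows "coeff (\<Prod>k\<in>K. [:1, - y k:]) 0 = 1
    \<and> (\<Sum>k\<in>K. y k) = - coeff (\<Prod>k\<in>K. [:1, - y k:]) 1
    \<and> (\<Sum>k\<in>K. y k ^ 2) = coeff (\<Prod>k\<in>K. [:1, - y k:]) 1 ^ 2 - 2 * coeff (\<Prod>k\<in>K. [:1, - y k:]) 2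
    \<and> (\<Sum>k\<in>K. y k ^ 3) = - (coeff (\<Prod>k\<in>K. [:1, - y k:]) 1 ^ 3)
        + 3 * coeff (\<Prod>k\<in>K. [:1, - y k:]) 1 * coeff (\<Prod>k\<in>K. [:1, - y k:]) 2
        - 3 * coeff (\<Prod>k\<in>K. [:1, - y k:]) 3"
  using assms
proof (induction K rule: finite_induct)
  case empty
  then show ?case by (simp add: numeral_2_eq_2 numeral_3_eq_3)
next
  case (insert x F)
  let ?P = "\<Prod>k\<in>F. [:1, - y k:]"
  have pr: "(\<Prod>k\<in>insert x F. [:1, - y k:]) = [:1, - y x:] * ?P"
    using insert by simp
  have c1: "coeff ([:1, - y x:] * ?P) 1 = coeff ?P 1 - y x * coeff ?P 0"
    using coeff_lin_mult(2)[of "y x" ?P 0] by simp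
  have c2: "coeff ([:1, - y x:] * ?P) 2 = coeff ?P 2 - y x * coeff ?P 1"
    using coeff_lin_mult(2)[of "y x" ?P 1] by (simp add: numeral_2_eq_2)
  have c3: "coeff ([:1, - y x:] * ?P) 3 = coeff ?P 3 - y x * coeff ?P 2"
    using coeff_lin_mult(2)[of "y x" ?P 2] by (simp add: numeral_3_eq_3 numeral_2_eq_2)
  have c0: "coeff ([:1, - y x:] * ?P) 0 = 1"
    using coeff_lin_mult(1)[of "y x" ?P] insert by simp
  have IH: "coeff ?P 0 = 1" "(\<Sum>k\<in>F. y k) = - coeff ?P 1"
    "(\<Sum>k\<in>F. y k ^ 2) = coeff ?P 1 ^ 2 - 2 * coeff ?P 2"
    "(\<Sum>k\<in>F. y k ^ 3) = - (coeff ?P 1 ^ 3) + 3 * coeff ?P 1 * coeff ?P 2 - 3 * coeff ?P 3"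
    using insert.IH by auto
  have A1: "t + - b1 = - (b1 - t * 1)" for t b1 :: real by simp
  have A2: "t ^ 2 + (b1 ^ 2 - 2 * b2) = (b1 - t * 1) ^ 2 - 2 * (b2 - t * b1)" for t b1 b2 :: real
    by (simp add: power2_eq_square algebra_simps)
  have A3: "t ^ 3 + (- (b1 ^ 3) + 3 * b1 * b2 - 3 * b3) =
     - ((b1 - t * 1) ^ 3) + 3 * (b1 - t * 1) * (b2 - t * b1) - 3 * (b3 - t * b2)" for t b1 b2 b3 :: real
    by (simp add: power3_eq_cube algebra_simps)
  have s: "(\<Sum>k\<in>insert x F. f k) = f x + (\<Sum>k\<in>F. f k)" for f :: "'a \<Rightarrow> real"
    using insert by simp
  show ?case unfolding pr c0 c1 c2 c3 s IH
    using A1[of "y x" "coeff ?P 1"] A2[of "y x" "coeff ?P 1" "coeff ?P 2"]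
      A3[of "y x" "coeff ?P 1" "coeff ?P 2" "coeff ?P 3"] IH(1) by simp
qed

lemma final_alg: "- ((-2 * x - 2 * x ^ 2) ^ 3) + 3 * (-2 * x - 2 * x ^ 2) * (-4/3 * x - 2/3 * x ^ 2 + 4/3 * x ^ 3 + 2/3 * x ^ 4)
  - 3 * (-16/15 * x - 16/45 * x ^ 2 + 4/3 * x ^ 3 + 4/9 * x ^ 4 - 4/15 * x ^ 5 - 4/45 * x ^ 6)
  = 8 * (x + 1) * x * (8 * x ^ 4 + 16 * x ^ 3 + 19 * x ^ 2 + 11 * x + 6) / (15::real)"
  by algebra

theorem mainTheorem20:
  fixes n :: nat
  assumes "n \<ge> 1"
  shows "(\<Sum>j=1..n. csc ((2 * real j - 1) * pi / (4 * real n + 2)) ^ 6)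
         = 8 * (real n + 1) * real n * (8 * real n ^ 4 + 16 * real n ^ 3 + 19 * real n ^ 2 + 11 * real n + 6) / 15"
proof -
  define th where "th j = (2 * real j - 1) * pi / (4 * real n + 2)" for j :: nat
  define s where "s j = sin (th j) ^ 2" for j
  define P where "P = (\<Prod>j\<in>{1..n}. [:1, - (1 / s j):])"
  have thb: "0 < th j \<and> th j < pi / 2" if "j \<in> {1..n}" for j
  proof -
    have "real j \<ge> 1" "real j \<le> real n" using that by auto
    then have a: "0 < 2 * real j - 1" "2 * real j - 1 < (4 * real n + 2) / 2" by auto
    have "0 < (2 * real j - 1) * pi" using a(1) by simp
    moreover have "(2 * real j - 1) * pi < ((4 * real n + 2) / 2) * pi"
      using a(2) by (intro mult_strict_right_mono) auto
    ultimately have "0 < (2 * real j - 1) * pi" "(2 * real j - 1) * pi < (4 * real n + 2) * (pi / 2)"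
      by auto
    then show ?thesis unfolding th_def by (simp add: field_simps)
  qed
  have sinpos: "sin (th j) > 0" if "j \<in> {1..n}" for j
    using thb[OF that] by (intro sin_gt_zero) auto
  have spos: "s j > 0" if "j \<in> {1..n}" for j
    using sinpos[OF that] unfolding s_def by simp
  have cospos: "cos (th j) > 0" if "j \<in> {1..n}" for j
    using thb[OF that] by (intro cos_gt_zero_pi) auto
  have root: "poly (Qp n) (s j) = 0" if "j \<in> {1..n}" for j
  proof -
    have "(2 * real n + 1) * th j = of_int (int j - 1) * pi + pi / 2"
      unfolding th_def using that by (simp add: field_simps)
    then have "cos ((2 * real n + 1) * th j) = 0"
      using cos_zero_iff_int2 by blast
    then show ?thesis using Qp_cos[of n "th j"] cospos[OF that] unfolding s_def by simp
  qed
  have inj: "inj_on s {1..n}"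
  proof (rule inj_onI)
    fix i j assume i: "i \<in> {1..n}" and j: "j \<in> {1..n}" and e: "s i = s j"
    have "sin (th i) = sin (th j)"
      using e sinpos[OF i] sinpos[OF j] unfolding s_def
      using power2_eq_iff_nonneg[of "sin (th i)" "sin (th j)"] by simp
    moreover have "- (pi/2) \<le> th i" "th i \<le> pi/2" "- (pi/2) \<le> th j" "th j \<le> pi/2"
      using thb[OF i] thb[OF j] by linarith+
    ultimately have "th i = th j"
      using sin_inj_pi by blast
    moreover have "(4 * real n + 2) \<noteq> 0" by simp
    ultimately have "(2 * real i - 1) * pi = (2 * real j - 1) * pi"
      unfolding th_def by (simp add: divide_cancel_right)
    then show "i = j" by simp
  qed
  have degP: "degree P \<le> n"
  proof -
    have "degree P \<le> (\<Sum>j\<in>{1..n}. degree [:1, - (1 / s j):])"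
      unfolding P_def using degree_prod_sum_le[of "{1..n}" "\<lambda>j. [:1, - (1 / s j):]"]
      by (simp add: o_def)
    also have "\<dots> \<le> (\<Sum>j\<in>{1..n}. 1)" by (intro sum_mono) simp
    finally show ?thesis by simp
  qed
  have PQ: "Qp n = P"
  proof (rule poly_eqI_degree[where A = "insert 0 (s ` {1..n})"])
    fix x assume "x \<in> insert 0 (s ` {1..n})"
    then show "poly (Qp n) x = poly P x"
    proof
      assume "x = 0"
      have "coeff P 0 = 1" using vieta3[of "{1..n}" "\<lambda>j. 1 / s j"] unfolding P_def by simp
      then show ?thesis using \<open>x = 0\<close> by (simp add: Qp_c0 poly_0_coeff_0)
    next
      assume "x \<in> s ` {1..n}"
      then obtain j where j: "j \<in> {1..n}" "x = s j" by auto
      have "poly P x = 0" unfolding P_def poly_prod using j spos[OF j(1)]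
        by (intro prod_zero) (auto intro!: bexI[of _ j])
      then show ?thesis using root[OF j(1)] j by simp
    qed
  next
    have "0 \<notin> s ` {1..n}" using spos by force
    then have "card (insert 0 (s ` {1..n})) = Suc n"
      using card_image[OF inj] by simp
    then show "degree (Qp n) < card (insert 0 (s ` {1..n}))"
      "degree P < card (insert 0 (s ` {1..n}))" using Qp_deg[of n] degP by auto
  qed
  have V: "(\<Sum>j\<in>{1..n}. (1 / s j) ^ 3) = - (coeff P 1 ^ 3) + 3 * coeff P 1 * coeff P 2 - 3 * coeff P 3"
    using vieta3[of "{1..n}" "\<lambda>j. 1 / s j"] unfolding P_def by simp
  have "(\<Sum>j=1..n. csc ((2 * real j - 1) * pi / (4 * real n + 2)) ^ 6) = (\<Sum>j\<in>{1..n}. (1 / s j) ^ 3)"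
    by (intro sum.cong) (auto simp: csc_def s_def th_def power_divide power_mult[symmetric])
  also have "\<dots> = - (coeff (Qp n) 1 ^ 3) + 3 * coeff (Qp n) 1 * coeff (Qp n) 2 - 3 * coeff (Qp n) 3"
    using V PQ by simp
  also have "\<dots> = 8 * (real n + 1) * real n * (8 * real n ^ 4 + 16 * real n ^ 3 + 19 * real n ^ 2 + 11 * real n + 6) / 15"
    unfolding Qp_c1 Qp_c2 Qp_c3 by (rule final_alg)
  finally show ?thesis .
qed

end
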